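(* Let $(X,f)$ be a dynamical system. If $(X,f)$ is $\Delta$-transitive, then for every $r\in\mathbb{N}$ and every $\mathbf{a}\in\mathbb{N}^r_*$, the system $(X^r,f^{(\mathbf{a})})$ is also $\Delta$-transitive.
   Context: A dynamical system is a pair $(X,f)$ with $X$ a compact metric space and $f:X\to X$ continuous. $\mathbb{N}=\{1,2,\dots\}$; $\mathbb{N}^r_*=\{(n_1,\dots,n_r)\in\mathbb{N}^r: n_1<n_2<\dots<n_r\}$. For a system $(Y,g)$, a point $y$ is a transitive point if its $\omega$-limit set $\omega(y,g)$ equals $Y$. For $\mathbf{a}\in\mathbb{N}^r$, $f^{(\mathbf{a})}=f^{a_1}\times\dots\times f^{a_r}:X^r\to X^r$. $(X,f)$ is $\Delta$-$\mathbf{a}$-transitive if there is $x\in X$ such that $(x,\dots,x)$ is a transitive point of $(X^r,f^{(\mathbf{a})})$; $(X,f)$ is $\Delta$-transitive if it is $\Delta$-$(1,2,\dots,n)$-transitive for every $n\in\mathbb{N}$. (The same notions apply to the system $(X^r,f^{(\mathbf{a})})$ in place of $(X,f)$.) *)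

theory Defs
  imports "HOL-Analysis.Analysis"
begin

text \<open>Points of the r-fold product Y^r are represented as extensional functions
  on the index set {..<r} (i.e. elements of PiE {..<r} (\<lambda>_. Y)), carrying the
  product topology inherited from the function type.\<close>

definition prod_space :: "nat \<Rightarrow> 'b set \<Rightarrow> (nat \<Rightarrow> 'b) set" where
  "prod_space r Y = PiE {..<r} (\<lambda>_. Y)"

definition diag :: "nat \<Rightarrow> 'b \<Rightarrow> (nat \<Rightarrow> 'b)" where
  "diag r y = (\<lambda>i\<in>{..<r}. y)"

text \<open>g^(a) = g^{a_1} x ... x g^{a_r} (indices shifted to 0..r-1).\<close>
definition prod_map :: "nat \<Rightarrow> (nat \<Rightarrow> nat) \<Rightarrow> ('b \<Rightarrow> 'b) \<Rightarrow> (nat \<Rightarrow> 'b) \<Rightarrow> (nat \<Rightarrow> 'b)" where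
  "prod_map r a g = (\<lambda>z. \<lambda>i\<in>{..<r}. (g ^^ a i) (z i))"

definition omega_limit :: "('b::topological_space \<Rightarrow> 'b) \<Rightarrow> 'b \<Rightarrow> 'b set" where
  "omega_limit g x = {y. \<forall>U. open U \<and> y \<in> U \<longrightarrow> (\<forall>N. \<exists>n\<ge>N. (g ^^ n) x \<in> U)}"

definition transitive_point :: "'b::topological_space set \<Rightarrow> ('b \<Rightarrow> 'b) \<Rightarrow> 'b \<Rightarrow> bool" where
  "transitive_point Y g y \<longleftrightarrow> omega_limit g y = Y"

definition delta_a_transitive ::
  "'b::topological_space set \<Rightarrow> ('b \<Rightarrow> 'b) \<Rightarrow> nat \<Rightarrow> (nat \<Rightarrow> nat) \<Rightarrow> bool" where
  "delta_a_transitive Y g r a \<longleftrightarrow>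
     (\<exists>y\<in>Y. transitive_point (prod_space r Y) (prod_map r a g) (diag r y))"

definition delta_transitive :: "'b::topological_space set \<Rightarrow> ('b \<Rightarrow> 'b) \<Rightarrow> bool" where
  "delta_transitive Y g \<longleftrightarrow> (\<forall>n\<ge>1. delta_a_transitive Y g n (\<lambda>i. i + 1))"

definition strict_incr_tuple :: "nat \<Rightarrow> (nat \<Rightarrow> nat) \<Rightarrow> bool" where
  "strict_incr_tuple r a \<longleftrightarrow> (\<forall>i<r. 1 \<le> a i) \<and> (\<forall>i j. i < j \<and> j < r \<longrightarrow> a i < a j)"

end

theory Submission
  imports Defs
begin

lemma funpow_in:
  assumes "f ` X \<subseteq> X" "x \<in> X" shows "(f ^^ k) x \<in> X"
  using assms by (induction k) auto

lemma funpow_cont: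
  assumes "f ` X \<subseteq> X" "continuous_on X f" shows "continuous_on X (f ^^ k)"
proof (induction k)
  case 0 then show ?case by (simp add: continuous_on_id)
next
  case (Suc k)
  have "(f ^^ Suc k) = f \<circ> (f ^^ k)" by simp
  moreover have "(f ^^ k) ` X \<subseteq> X" using funpow_in[OF assms(1)] by auto
  ultimately show ?case using Suc continuous_on_compose continuous_on_subset assms(2) by metis
qed

lemma prod_map_pow:
  assumes "y \<in> extensional {..<r}"
  shows "(prod_map r a g ^^ k) y = (\<lambda>i\<in>{..<r}. (g ^^ (k * a i)) (y i))"
proof (induction k)
  case 0 then show ?case using assms by (simp add: restrict_def extensional_def fun_eq_iff)
next
  case (Suc k)
  show ?case using Suc by (simp add: prod_map_def funpow_add fun_eq_iff)
qed

lemma diag_ext: "diag n y \<in> extensional {..<n}"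
  by (simp add: diag_def)

lemma orbit_formula:
  assumes "y \<in> extensional {..<r}"
  shows "(prod_map n (\<lambda>i. i+1) (prod_map r a f) ^^ m) (diag n y)
     = (\<lambda>j\<in>{..<n}. \<lambda>i\<in>{..<r}. (f ^^ (m * (j+1) * a i)) (y i))"
  using assms by (simp add: prod_map_pow[OF diag_ext] prod_map_pow diag_def fun_eq_iff mult.assoc)

lemma compact_prod_space:
  fixes S :: "'b::topological_space set"
  assumes "compact S" shows "compact (prod_space r S)"
proof -
  have eq: "prod_space r S = PiE UNIV (\<lambda>i. if i < r then S else {undefined})"
    by (auto simp: prod_space_def PiE_def Pi_def extensional_def)
  show ?thesis unfolding eq
    using compactin_PiE[of "\<lambda>i. euclidean" UNIV "\<lambda>i. if i < r then S else {undefined}"] assms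
    by (simp add: euclidean_product_topology compactin_euclidean_iff)
qed


lemma hit:
  fixes X :: "'a::topological_space set"
  assumes "delta_transitive X f" "L \<ge> 1" "finite J" "inj_on e J"
    and eL: "\<And>t. t \<in> J \<Longrightarrow> 1 \<le> e t \<and> e t \<le> L"
    and T: "\<And>t. t \<in> J \<Longrightarrow> open (T t) \<and> c t \<in> T t \<and> c t \<in> X"
  shows "\<exists>x\<in>X. \<exists>k\<ge>N. \<forall>t\<in>J. (f ^^ (k * e t)) x \<in> T t"
proof -
  obtain x where x: "x \<in> X"
    and om: "omega_limit (prod_map L (\<lambda>i. i+1) f) (diag L x) = prod_space L X"
    using assms(1,2) unfolding delta_transitive_def delta_a_transitive_def transitive_point_def
    by blast
  define p where "p = (\<lambda>s\<in>{..<L}. if s+1 \<in> e`J then c (inv_into J e (s+1)) else x)"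
  have pin: "p \<in> prod_space L X"
    unfolding p_def prod_space_def using x T inv_into_into[of _ e J]
    by (auto simp: PiE_def Pi_def)
  define Op where "Op = {z. \<forall>t\<in>J. z (e t - 1) \<in> T t}"
  have "open Op" unfolding Op_def
    by (rule product_topology_basis') (use assms(3) T in auto)
  have pO: "p \<in> Op"
  proof -
    { fix t assume t: "t \<in> J"
      then have "e t - 1 < L" "e t - 1 + 1 = e t" using eL[OF t] by auto
      then have "p (e t - 1) = c t" using t assms(4) by (simp add: p_def)
      then have "p (e t - 1) \<in> T t" using T t by simp }
    then show ?thesis unfolding Op_def by blast
  qed
  from pin om have "p \<in> omega_limit (prod_map L (\<lambda>i. i+1) f) (diag L x)" by simp
  then obtain k where k: "k \<ge> N" "((prod_map L (\<lambda>i. i+1) f) ^^ k) (diag L x) \<in> Op"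
    using \<open>open Op\<close> pO unfolding omega_limit_def by blast
  have eq: "((prod_map L (\<lambda>i. i+1) f) ^^ k) (diag L x) = (\<lambda>i\<in>{..<L}. (f ^^ (k * (i+1))) x)"
    by (subst prod_map_pow[OF diag_ext]) (simp add: diag_def fun_eq_iff)
  { fix t assume t: "t \<in> J"
    then have "e t - 1 < L" "e t - 1 + 1 = e t" using eL[OF t] by auto
    moreover have "(\<lambda>i\<in>{..<L}. (f ^^ (k * (i + 1))) x) (e t - 1) \<in> T t"
      using k(2) t unfolding eq Op_def by blast
    moreover have "(\<lambda>i\<in>{..<L}. (f ^^ (k * (i + 1))) x) (e t - 1) = (f ^^ (k * (e t - 1 + 1))) x"
      using \<open>e t - 1 < L\<close> by (simp only: restrict_apply' lessThan_iff)
    ultimately have "(f ^^ (k * e t)) x \<in> T t" by metis }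
  then show ?thesis using x k(1) by blast
qed


lemma arith_inj:
  fixes i i' r j j' b b' :: nat
  assumes "i < r" "i' < r" "(r+1)*(j+1)*b + i + 1 = (r+1)*(j'+1)*b' + i' + 1"
  shows "i = i' \<and> (j+1)*b = (j'+1)*b'"
proof -
  have e: "(r+1)*((j+1)*b) + (i + 1) = (r+1)*((j'+1)*b') + (i' + 1)"
    using assms(3) by (simp add: algebra_simps)
  have "((r+1)*((j+1)*b) + (i + 1)) mod (r+1) = (i+1) mod (r+1)"
    by (rule mod_mult_self4)
  moreover have "((r+1)*((j'+1)*b') + (i' + 1)) mod (r+1) = (i'+1) mod (r+1)"
    by (rule mod_mult_self4)
  ultimately have "(i+1) mod (r+1) = (i'+1) mod (r+1)" using e by metis
  then have "i = i'" using assms(1,2) by simp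
  then have "(r+1)*((j+1)*b) = (r+1)*((j'+1)*b')" using e by linarith
  then show ?thesis using \<open>i = i'\<close> nat_mult_eq_cancel1[of "r+1"] by simp
qed

lemma open_basis_fun:
  fixes Ob :: "('i \<Rightarrow> 'b::topological_space) set"
  assumes "open Ob" "y \<in> Ob"
  obtains V where "\<And>i. y i \<in> V i" "\<And>i. open (V i)" "\<And>z. (\<And>i. z i \<in> V i) \<Longrightarrow> z \<in> Ob"
proof -
  have "openin (product_topology (\<lambda>i. euclidean) UNIV) Ob"
    using assms by (simp add: euclidean_product_topology)
  from product_topology_open_contains_basis[OF this assms(2)] obtain V where
    "y \<in> (\<Pi>\<^sub>E i\<in>UNIV. V i)" "\<forall>i. openin euclidean (V i)" "(\<Pi>\<^sub>E i\<in>UNIV. V i) \<subseteq> Ob"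
    by blast
  moreover have "\<And>z. (\<And>i. z i \<in> V i) \<Longrightarrow> z \<in> Ob"
    using calculation(3) by (auto simp: PiE_def Pi_def)
  ultimately show ?thesis using that[of V] by (auto simp: PiE_def Pi_def)
qed

lemma q_le: fixes q j b :: nat assumes "1 \<le> b" shows "q \<le> q*(j+1)*b"
proof -
  have "1 \<le> (j+1)*b" using assms by simp
  then have "q*1 \<le> q*((j+1)*b)" by (rule mult_le_mono2)
  then show ?thesis by (metis mult.assoc mult.right_neutral)
qed

lemma dense_hit:
  fixes X :: "'a::topological_space set"
  assumes fX: "f ` X \<subseteq> X" and dt: "delta_transitive X f" and r1: "r \<ge> 1"
    and a1: "\<And>i. i < r \<Longrightarrow> 1 \<le> a i"
    and y0: "y0 \<in> prod_space r X" "open Ob" "y0 \<in> Ob"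
    and w: "w \<in> prod_space n (prod_space r X)" "open U" "w \<in> U"
  shows "\<exists>y\<in>prod_space r X \<inter> Ob. \<exists>m\<ge>N.
           (prod_map n (\<lambda>i. i+1) (prod_map r a f) ^^ m) (diag n y) \<in> U"
proof -
  obtain V where V: "\<And>i. y0 i \<in> V i" "\<And>i. open (V i)" "\<And>z. (\<And>i. z i \<in> V i) \<Longrightarrow> z \<in> Ob"
    using open_basis_fun[OF y0(2,3)] by metis
  obtain W where W: "\<And>j. w j \<in> W j" "\<And>j. open (W j)" "\<And>z. (\<And>j. z j \<in> W j) \<Longrightarrow> z \<in> U"
    using open_basis_fun[OF w(2,3)] by metis
  have "\<forall>j. \<exists>Q. (\<forall>i. w j i \<in> Q i) \<and> (\<forall>i. open (Q i)) \<and> (\<forall>z. (\<forall>i. z i \<in> Q i) \<longrightarrow> z \<in> W j)"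
  proof
    fix j
    obtain Q where "\<And>i. w j i \<in> Q i" "\<And>i. open (Q i)" "\<And>z. (\<And>i. z i \<in> Q i) \<Longrightarrow> z \<in> W j"
      using open_basis_fun[OF W(2) W(1), of j] by metis
    then show "\<exists>Q. (\<forall>i. w j i \<in> Q i) \<and> (\<forall>i. open (Q i)) \<and> (\<forall>z. (\<forall>i. z i \<in> Q i) \<longrightarrow> z \<in> W j)"
      by blast
  qed
  then obtain Q where Q: "\<And>j i. w j i \<in> Q j i" "\<And>j i. open (Q j i)"
    "\<And>j z. (\<And>i. z i \<in> Q j i) \<Longrightarrow> z \<in> W j"
    by metis
  define q where "q = r + 1"
  define S where "S = sum a {..<r}"
  define L where "L = q * n * S + r"
  define J where "J = Inl ` {..<r} \<union> Inr ` ({..<n} \<times> {..<r})"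
  define e where "e = case_sum (\<lambda>i. i+1) (\<lambda>(j,i). q*(j+1)*a i + i + 1)"
  define T where "T = case_sum V (\<lambda>(j,i). Q j i)"
  define c where "c = case_sum y0 (\<lambda>(j,i). w j i)"
  have "finite J" unfolding J_def by auto
  have "inj_on e J"
  proof (rule inj_onI)
    fix s t assume s: "s \<in> J" and t: "t \<in> J" and est: "e s = e t"
    show "s = t"
    proof (cases s)
      case (Inl i)
      then have i: "i < r" using s unfolding J_def by auto
      show ?thesis
      proof (cases t)
        case (Inl i') then show ?thesis using est \<open>s = Inl i\<close> by (simp add: e_def)
      next
        case (Inr p)
        then obtain j' i' where "p = (j', i')" by force
        then have "i + 1 = q*(j'+1)*a i' + i' + 1" using est Inr \<open>s = Inl i\<close> by (simp add: e_def)
        moreover have "i' < r" using t Inr \<open>p = (j', i')\<close> unfolding J_def by auto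
        then have "q*(j'+1)*a i' \<ge> q" using a1 by (intro q_le) auto
        ultimately show ?thesis using i unfolding q_def by linarith
      qed
    next
      case (Inr p)
      then obtain j i where p: "p = (j, i)" by force
      then have i: "i < r" and j: "j < n" using s Inr unfolding J_def by auto
      show ?thesis
      proof (cases t)
        case (Inl i')
        then have "i' + 1 = q*(j+1)*a i + i + 1" using est Inr p by (simp add: e_def)
        moreover have "q*(j+1)*a i \<ge> q" using a1 i by (intro q_le) auto
        moreover have "i' < r" using t Inl unfolding J_def by auto
        ultimately show ?thesis unfolding q_def by linarith
      next
        case (Inr p')
        then obtain j' i' where p': "p' = (j', i')" by force
        then have i': "i' < r" using t Inr unfolding J_def by auto
        have "(r+1)*(j+1)*a i + i + 1 = (r+1)*(j'+1)*a i' + i' + 1"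
          using est \<open>s = Inr p\<close> Inr p p' by (simp add: e_def q_def)
        from arith_inj[OF i i' this] have "i = i'" "(j+1)*a i = (j'+1)*a i'" by auto
        then have "j = j'" using a1[OF i] by simp
        then show ?thesis using \<open>s = Inr p\<close> Inr p p' \<open>i = i'\<close> by simp
      qed
    qed
  qed
  have S: "a i \<le> S" if "i < r" for i
    unfolding S_def using that by (intro member_le_sum) auto
  have eL: "1 \<le> e t \<and> e t \<le> L" if "t \<in> J" for t
  proof -
    { fix i assume "i < r" then have "e (Inl i) \<le> L" unfolding e_def L_def by simp }
    moreover
    { fix j i assume j: "j < n" and i: "i < r"
      have "(j+1) * a i \<le> n * S" using j S[OF i] by (intro mult_le_mono) auto
      then have "q*((j+1)*a i) \<le> q*(n*S)" by (rule mult_le_mono2)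
      then have "q*(j+1)*a i \<le> q*n*S" by (metis mult.assoc)
      then have "e (Inr (j,i)) \<le> L" using i unfolding e_def L_def by simp }
    ultimately show ?thesis using that unfolding J_def by (auto simp: e_def)
  qed
  have Tc: "open (T t) \<and> c t \<in> T t \<and> c t \<in> X" if "t \<in> J" for t
  proof -
    have y0X: "y0 i \<in> X" if "i < r" for i using y0(1) that by (auto simp: prod_space_def)
    have wX: "w j i \<in> X" if "j < n" "i < r" for i j
      using w(1) that by (auto simp: prod_space_def)
    show ?thesis using that V Q y0X wX unfolding J_def T_def c_def by auto
  qed
  have "L \<ge> 1" using r1 unfolding L_def by simp
  have "\<exists>x\<in>X. \<exists>k\<ge>N. \<forall>t\<in>J. (f ^^ (k * e t)) x \<in> T t"
    by (rule hit[OF dt \<open>L \<ge> 1\<close> \<open>finite J\<close> \<open>inj_on e J\<close>]) (use eL Tc in auto)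
  then obtain x k where x: "x \<in> X" and k: "k \<ge> N" and hitk: "\<And>t. t \<in> J \<Longrightarrow> (f ^^ (k * e t)) x \<in> T t"
    by metis
  define y where "y = (\<lambda>i\<in>{..<r}. (f ^^ (k * (i+1))) x)"
  have yY: "y \<in> prod_space r X"
    unfolding y_def prod_space_def using funpow_in[OF fX x] by auto
  have yO: "y \<in> Ob"
  proof (rule V(3))
    fix i show "y i \<in> V i"
    proof (cases "i < r")
      case True
      then have "Inl i \<in> J" unfolding J_def by auto
      from hitk[OF this] True show ?thesis by (simp add: y_def e_def T_def)
    next
      case False
      then have "y0 i = undefined" using y0(1) by (auto simp: prod_space_def PiE_def extensional_def)
      then show ?thesis using V(1)[of i] False by (simp add: y_def)
    qed
  qed
  have "y \<in> extensional {..<r}" unfolding y_def by simp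
  have orb: "(prod_map n (\<lambda>i. i+1) (prod_map r a f) ^^ (k*q)) (diag n y) \<in> U"
    unfolding orbit_formula[OF \<open>y \<in> extensional {..<r}\<close>]
  proof (rule W(3))
    fix j
    show "(\<lambda>j\<in>{..<n}. \<lambda>i\<in>{..<r}. (f ^^ (k * q * (j + 1) * a i)) (y i)) j \<in> W j"
    proof (cases "j < n")
      case False
      then have "w j = undefined" using w(1) by (auto simp: prod_space_def PiE_def extensional_def)
      then show ?thesis using W(1)[of j] False by simp
    next
      case True
      have "(\<lambda>i\<in>{..<r}. (f ^^ (k * q * (j + 1) * a i)) (y i)) \<in> W j"
      proof (rule Q(3))
        fix i
        show "(\<lambda>i\<in>{..<r}. (f ^^ (k * q * (j + 1) * a i)) (y i)) i \<in> Q j i"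
        proof (cases "i < r")
          case False
          have "w j \<in> prod_space r X" using w(1) True by (auto simp: prod_space_def)
          then have "w j i = undefined" using False by (auto simp: prod_space_def PiE_def extensional_def)
          then show ?thesis using Q(1)[of j i] False by simp
        next
          case ii: True
          then have "Inr (j,i) \<in> J" unfolding J_def using True by auto
          from hitk[OF this] have A: "(f ^^ (k * (q*(j+1)*a i + i + 1))) x \<in> Q j i"
            by (simp add: e_def T_def)
          have B: "k * (q*(j+1)*a i + i + 1) = k * q * (j + 1) * a i + k * (i+1)"
            by (simp add: algebra_simps)
          from A have "(f ^^ (k * q * (j + 1) * a i + k * (i+1))) x \<in> Q j i" by (simp only: B)
          then have "(f ^^ (k * q * (j + 1) * a i)) ((f ^^ (k * (i+1))) x) \<in> Q j i"
            by (simp only: funpow_add o_apply)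
          then have "(f ^^ (k * q * (j + 1) * a i)) (y i) \<in> Q j i"
            using ii by (simp only: y_def restrict_apply' lessThan_iff)
          then show ?thesis using ii by simp
        qed
      qed
      then show ?thesis using True by simp
    qed
  qed
  have "k * q \<ge> N" using k unfolding q_def by (metis le_add2 le_trans mult_le_mono2 mult.comm_neutral)
  then show ?thesis using yY yO orb by blast
qed


lemma Phi_cont:
  fixes X :: "'a::topological_space set"
  assumes fX: "f ` X \<subseteq> X" and cf: "continuous_on X f"
  shows "continuous_on (prod_space r X)
     (\<lambda>y. (prod_map n (\<lambda>i. i+1) (prod_map r a f) ^^ m) (diag n y))"
proof -
  have "continuous_on (prod_space r X)
     (\<lambda>y. \<lambda>j\<in>{..<n}. \<lambda>i\<in>{..<r}. (f ^^ (m * (j+1) * a i)) (y i))"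
  proof (rule continuous_on_coordinatewise_then_product)
    fix j
    show "continuous_on (prod_space r X) (\<lambda>y. (\<lambda>j\<in>{..<n}. \<lambda>i\<in>{..<r}. (f ^^ (m * (j+1) * a i)) (y i)) j)"
    proof (cases "j < n")
      case False then show ?thesis by (simp add: continuous_on_const)
    next
      case True
      have "continuous_on (prod_space r X) (\<lambda>y. \<lambda>i\<in>{..<r}. (f ^^ (m * (j+1) * a i)) (y i))"
      proof (rule continuous_on_coordinatewise_then_product)
        fix i
        show "continuous_on (prod_space r X) (\<lambda>y. (\<lambda>i\<in>{..<r}. (f ^^ (m * (j+1) * a i)) (y i)) i)"
        proof (cases "i < r")
          case False then show ?thesis by (simp add: continuous_on_const)
        next
          case True
          have c1: "continuous_on (prod_space r X) (\<lambda>y. y i)"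
            by (rule continuous_on_subset[OF continuous_on_product_coordinates subset_UNIV])
          have im: "(\<lambda>y. y i) ` prod_space r X \<subseteq> X"
            using True by (auto simp: prod_space_def)
          have "continuous_on (prod_space r X) ((f ^^ (m * (j+1) * a i)) \<circ> (\<lambda>y. y i))"
            by (rule continuous_on_compose[OF c1]) (rule continuous_on_subset[OF funpow_cont[OF fX cf] im])
          then show ?thesis using True by (simp add: o_def)
        qed
      qed
      then show ?thesis using True by simp
    qed
  qed
  moreover have eq: "y \<in> prod_space r X \<Longrightarrow> (\<lambda>j\<in>{..<n}. \<lambda>i\<in>{..<r}. (f ^^ (m * (j+1) * a i)) (y i)) = (prod_map n (\<lambda>i. i+1) (prod_map r a f) ^^ m) (diag n y)
     " for y
    by (rule orbit_formula[symmetric]) (auto simp add: prod_space_def PiE_def)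
  ultimately show ?thesis by (rule continuous_on_eq)
qed

lemma Phi_in:
  assumes fX: "f ` X \<subseteq> X" and y: "y \<in> prod_space r X"
  shows "(prod_map n (\<lambda>i. i+1) (prod_map r a f) ^^ m) (diag n y) \<in> prod_space n (prod_space r X)"
proof -
  have "y \<in> extensional {..<r}" using y by (simp add: prod_space_def PiE_def)
  then show ?thesis unfolding orbit_formula[OF \<open>y \<in> extensional {..<r}\<close>]
    using y funpow_in[OF fX] by (auto simp: prod_space_def PiE_iff)
qed


theorem proposition5p3:
  fixes X :: "'a::metric_space set" and f :: "'a \<Rightarrow> 'a"
  assumes "compact X" and "f ` X \<subseteq> X" and "continuous_on X f"
    and "delta_transitive X f"
  shows "\<forall>r\<ge>1. \<forall>a. strict_incr_tuple r a \<longrightarrow>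
           delta_transitive (prod_space r X) (prod_map r a f)"
proof (intro allI impI)
  fix r :: nat and a
  assume r1: "r \<ge> 1" and sa: "strict_incr_tuple r a"
  have a1: "\<And>i. i < r \<Longrightarrow> 1 \<le> a i" using sa by (simp add: strict_incr_tuple_def)
  have "X \<noteq> {}" using assms(4)
    unfolding delta_transitive_def delta_a_transitive_def by auto
  show "delta_transitive (prod_space r X) (prod_map r a f)"
    unfolding delta_transitive_def
  proof (intro allI impI)
    fix n :: nat assume n1: "n \<ge> 1"
    define Y where "Y = prod_space r X"
    define Z where "Z = prod_space n Y"
    define H where "H = prod_map n (\<lambda>i. i+1) (prod_map r a f)"
    define Phi where "Phi = (\<lambda>m y. (H ^^ m) (diag n y))"
    define \<rho> where "\<rho> = (\<lambda>k::nat. inverse (real (Suc k)))"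
    have \<rho>pos: "\<rho> k > 0" for k unfolding \<rho>_def by simp
    have cY: "compact Y" unfolding Y_def by (rule compact_prod_space[OF assms(1)])
    have cZ: "compact Z" unfolding Z_def by (rule compact_prod_space[OF cY])
    have "Y \<noteq> {}"
    proof -
      obtain x where "x \<in> X" using \<open>X \<noteq> {}\<close> by blast
      then have "(\<lambda>i\<in>{..<r}. x) \<in> Y" unfolding Y_def prod_space_def by auto
      then show ?thesis by blast
    qed
    have PhiZ: "y \<in> Y \<Longrightarrow> Phi m y \<in> Z" for m y
      unfolding Phi_def H_def Z_def Y_def by (rule Phi_in[OF assms(2)])
    have Phic: "continuous_on Y (Phi m)" for m
      unfolding Phi_def H_def Y_def by (rule Phi_cont[OF assms(2,3)])
    have "\<exists>F. F \<subseteq> Z \<and> finite F \<and> Z \<subseteq> (\<Union>d\<in>F. ball d (\<rho> k))" for k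
    proof -
      have "Z \<subseteq> (\<Union>d\<in>Z. ball d (\<rho> k))" using \<rho>pos by auto
      then obtain F where "F \<subseteq> Z" "finite F" "Z \<subseteq> (\<Union>d\<in>F. ball d (\<rho> k))"
        using compactE_image[OF cZ, of Z "\<lambda>d. ball d (\<rho> k)"] by auto
      then show ?thesis by blast
    qed
    then obtain F where F: "\<And>k. F k \<subseteq> Z" "\<And>k. finite (F k)" "\<And>k. Z \<subseteq> (\<Union>d\<in>F k. ball d (\<rho> k))"
      by metis
    define Wset where "Wset = (\<lambda>d k N. {y\<in>Y. \<exists>m\<ge>N. Phi m y \<in> ball d (\<rho> k)})"
    define \<G> where "\<G> = (\<lambda>((k,d),N). Wset d k N) ` ((SIGMA k:UNIV. F k) \<times> UNIV)"
    have c1: "countable (SIGMA k:(UNIV::nat set). F k)"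
      by (rule countable_SIGMA) (auto intro: countable_finite F(2))
    have "countable ((SIGMA k:UNIV. F k) \<times> (UNIV::nat set))"
      by (rule countable_SIGMA[OF c1]) simp
    then have "countable \<G>" unfolding \<G>_def by (rule countable_image)
    have Gprop: "openin (top_of_set Y) T \<and> top_of_set Y closure_of T = topspace (top_of_set Y)"
      if TG: "T \<in> \<G>" for T
    proof -
      obtain k d N where T: "T = Wset d k N" and d: "d \<in> F k" using TG unfolding \<G>_def by auto
      have "openin (top_of_set Y) (\<Union>m\<in>{N..}. Y \<inter> Phi m -` ball d (\<rho> k))"
        using Phic continuous_openin_preimage_eq by (intro openin_Union) blast
      moreover have "(\<Union>m\<in>{N..}. Y \<inter> Phi m -` ball d (\<rho> k)) = T"
        unfolding T Wset_def by auto
      ultimately have op: "openin (top_of_set Y) T" by simp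
      have "top_of_set Y closure_of T = topspace (top_of_set Y)"
        unfolding dense_intersects_open
      proof (intro allI impI)
        fix V assume V: "openin (top_of_set Y) V \<and> V \<noteq> {}"
        then obtain Ob where Ob: "open Ob" "V = Y \<inter> Ob" by (auto simp: openin_open)
        then obtain y0 where y0: "y0 \<in> Y" "y0 \<in> Ob" using V by auto
        have dZ: "d \<in> Z" using F(1) d by auto
        have "\<exists>y\<in>prod_space r X \<inter> Ob. \<exists>m\<ge>N.
           (prod_map n (\<lambda>i. i+1) (prod_map r a f) ^^ m) (diag n y) \<in> ball d (\<rho> k)"
          by (rule dense_hit[OF assms(2,4) r1 a1]) (use y0 Ob(1) dZ \<rho>pos in \<open>auto simp: Y_def Z_def\<close>)
        then obtain y m where "y \<in> Y \<inter> Ob" "m \<ge> N" "Phi m y \<in> ball d (\<rho> k)"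
          unfolding Y_def Phi_def H_def by blast
        then have "y \<in> T \<inter> V" unfolding T Wset_def Ob(2) by auto
        then show "T \<inter> V \<noteq> {}" by blast
      qed
      with op show ?thesis by simp
    qed
    have lc: "locally_compact_space (top_of_set Y) \<and> regular_space (top_of_set Y)"
      by (metis cY compact_imp_locally_compact_space compact_space_subtopology compactin_euclidean_iff
          metrizable_imp_regular_space metrizable_space_euclidean metrizable_space_subtopology)
    have "top_of_set Y closure_of \<Inter>\<G> = topspace (top_of_set Y)"
      by (rule Baire_category) (use lc \<open>countable \<G>\<close> Gprop in auto)
    then have "Y \<inter> \<Inter>\<G> \<noteq> {}" using \<open>Y \<noteq> {}\<close>
      by (metis closure_of_empty closure_of_restrict topspace_euclidean_subtopology)
    then obtain y where y: "y \<in> Y" "\<And>T. T \<in> \<G> \<Longrightarrow> y \<in> T" by blast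
    have "omega_limit H (diag n y) = Z"
    proof
      show "omega_limit H (diag n y) \<subseteq> Z"
      proof
        fix v assume v: "v \<in> omega_limit H (diag n y)"
        show "v \<in> Z"
        proof (rule ccontr)
          assume "v \<notin> Z"
          moreover have "open (- Z)" using cZ compact_imp_closed by blast
          ultimately obtain m where "(H ^^ m) (diag n y) \<in> - Z"
            using v unfolding omega_limit_def by blast
          then show False using PhiZ[OF y(1), of m] unfolding Phi_def by simp
        qed
      qed
    next
      show "Z \<subseteq> omega_limit H (diag n y)"
      proof
        fix v assume vZ: "v \<in> Z"
        show "v \<in> omega_limit H (diag n y)"
          unfolding omega_limit_def
        proof (intro CollectI allI impI)
          fix U N assume U: "open U \<and> v \<in> U"
          then obtain e where e: "e > 0" "ball v e \<subseteq> U" by (meson open_contains_ball)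
          obtain k0 where k0: "k0 > 0" "inverse (real k0) < e / 2"
            using ex_inverse_of_nat_less[of "e/2"] e by auto
          define k where "k = k0 - 1"
          have rk: "\<rho> k < e / 2" using k0 unfolding k_def \<rho>_def by simp
          obtain d where d: "d \<in> F k" "v \<in> ball d (\<rho> k)" using F(3)[of k] vZ by auto
          have "Wset d k N \<in> \<G>" unfolding \<G>_def using d(1) by force
          then have "y \<in> Wset d k N" by (rule y(2))
          then obtain m where m: "m \<ge> N" "Phi m y \<in> ball d (\<rho> k)" unfolding Wset_def by auto
          have "dist v (Phi m y) \<le> dist v d + dist d (Phi m y)" by (rule dist_triangle)
          also have "\<dots> < e" using d(2) m(2) rk by (simp add: dist_commute)
          finally have "Phi m y \<in> U" using e(2) by auto
          then show "\<exists>m\<ge>N. (H ^^ m) (diag n y) \<in> U" using m(1) unfolding Phi_def by blast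
        qed
      qed
    qed
    then show "delta_a_transitive (prod_space r X) (prod_map r a f) n (\<lambda>i. i + 1)"
      unfolding delta_a_transitive_def transitive_point_def
      using y(1) unfolding Y_def Z_def H_def by blast
  qed
qed


end
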